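(* Let $1 \to N \xrightarrow{i} G \xrightarrow{p} Q \to 1$ be a short exact sequence of groups, where $Q$ is arbitrary and $\nu(N) = 0$. Then $\nu(G) \le \nu(Q)$, with equality if the extension is split or central.
   Context: For a group $G$, the free subgroup rank is $\nu(G) = \max\{ n \ge 0 : (F_2)^n \text{ embeds into } G\} \in \mathbb{N}_0 \cup \{\infty\}$, where $F_2$ is the free group of rank two and $(F_2)^n$ is the $n$-fold direct product. The extension is central if $i(N)$ lies in the center of $G$, and split if $p$ admits a homomorphic section $Q \to G$. *)

theory Defs
  imports "HOL-Algebra.Algebra" "HOL-Library.Extended_Nat"
begin

text \<open>Letters are pairs (generator, inverted?), generators indexed by bool.
  Elements of F2 are freely reduced words; multiplication is concatenation
  followed by free reduction.\<close>

fun free_reduce :: "(bool \<times> bool) list \<Rightarrow> (bool \<times> bool) list" where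
  "free_reduce [] = []"
| "free_reduce (x # xs) =
     (case free_reduce xs of
        [] \<Rightarrow> [x]
      | y # ys \<Rightarrow> (if fst x = fst y \<and> snd x \<noteq> snd y then ys else x # y # ys))"

definition F2 :: "(bool \<times> bool) list monoid" where
  "F2 = \<lparr>carrier = {w. free_reduce w = w},
         monoid.mult = (\<lambda>u v. free_reduce (u @ v)),
         one = []\<rparr>"

definition F2_power_embeds :: "nat \<Rightarrow> ('a, 'm) monoid_scheme \<Rightarrow> bool" where
  "F2_power_embeds n G \<longleftrightarrow>
     (\<exists>h. h \<in> hom (product_group {..<n} (\<lambda>_. F2)) G \<and>
          inj_on h (carrier (product_group {..<n} (\<lambda>_. F2))))"

definition free_subgroup_rank :: "('a, 'm) monoid_scheme \<Rightarrow> enat" where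
  "free_subgroup_rank G = Sup (enat ` {n. F2_power_embeds n G})"

definition short_exact ::
  "('n, 'a) monoid_scheme \<Rightarrow> ('g, 'b) monoid_scheme \<Rightarrow> ('q, 'c) monoid_scheme
     \<Rightarrow> ('n \<Rightarrow> 'g) \<Rightarrow> ('g \<Rightarrow> 'q) \<Rightarrow> bool" where
  "short_exact N G Q i p \<longleftrightarrow>
     group N \<and> group G \<and> group Q \<and>
     i \<in> hom N G \<and> inj_on i (carrier N) \<and>
     p \<in> hom G Q \<and> p ` carrier G = carrier Q \<and>
     i ` carrier N = kernel G Q p"

definition central_ext ::
  "('n, 'a) monoid_scheme \<Rightarrow> ('g, 'b) monoid_scheme \<Rightarrow> ('n \<Rightarrow> 'g) \<Rightarrow> bool" where
  "central_ext N G i \<longleftrightarrow>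
     (\<forall>x \<in> i ` carrier N. \<forall>g \<in> carrier G. x \<otimes>\<^bsub>G\<^esub> g = g \<otimes>\<^bsub>G\<^esub> x)"

definition split_ext ::
  "('g, 'b) monoid_scheme \<Rightarrow> ('q, 'c) monoid_scheme \<Rightarrow> ('g \<Rightarrow> 'q) \<Rightarrow> bool" where
  "split_ext G Q p \<longleftrightarrow> (\<exists>s. s \<in> hom Q G \<and> (\<forall>q \<in> carrier Q. p (s q) = q))"

end

theory Submission
  imports Defs
begin


definition iv :: "bool \<times> bool \<Rightarrow> bool \<times> bool" where "iv x = (fst x, \<not> snd x)"

lemma iv_iv[simp]: "iv (iv x) = x" by (simp add: iv_def)
lemma iv_neq[simp]: "iv x \<noteq> x" "x \<noteq> iv x" by (auto simp: iv_def prod_eq_iff)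
lemma iv_eq_iff: "(fst x = fst y \<and> snd x \<noteq> snd y) = (y = iv x)"
  by (cases x; cases y; auto simp: iv_def)

fun red :: "(bool \<times> bool) list \<Rightarrow> bool" where
  "red [] = True" | "red [x] = True" | "red (x#y#ys) = (y \<noteq> iv x \<and> red (y#ys))"

definition push :: "bool \<times> bool \<Rightarrow> (bool \<times> bool) list \<Rightarrow> (bool \<times> bool) list" where
  "push x r = (case r of [] \<Rightarrow> [x] | y#ys \<Rightarrow> if y = iv x then ys else x#y#ys)"

lemma fr_Cons: "free_reduce (x#xs) = push x (free_reduce xs)"
  unfolding push_def by (simp only: free_reduce.simps(2) iv_eq_iff[symmetric])

declare free_reduce.simps(2)[simp del]

lemma red_tl: "red (x#xs) \<Longrightarrow> red xs"
  by (cases xs) auto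

lemma push_red: "red r \<Longrightarrow> red (push x r)"
  by (cases r rule: red.cases) (auto simp: push_def)

lemma fr_red: "red (free_reduce w)"
  by (induction w) (auto simp: fr_Cons push_red)

lemma red_fr: "red w \<Longrightarrow> free_reduce w = w"
proof (induction w)
  case Nil then show ?case by simp
next
  case (Cons x xs)
  then have "free_reduce xs = xs" using red_tl by blast
  then show ?case using Cons.prems by (cases xs) (auto simp: fr_Cons push_def)
qed

lemma fr_eq_iff: "free_reduce w = w \<longleftrightarrow> red w"
  using fr_red red_fr by metis

lemma fr_append: "free_reduce (xs @ ys) = foldr push xs (free_reduce ys)"
  by (induction xs) (auto simp: fr_Cons)

lemma push_push_inv: "red s \<Longrightarrow> push x (push (iv x) s) = s"
proof (cases s)
  case Nil then show ?thesis by (simp add: push_def)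
next
  case (Cons z zs)
  assume r: "red s"
  show ?thesis
  proof (cases "z = x")
    case True
    then show ?thesis using r Cons by (cases zs) (auto simp: push_def)
  next
    case False
    then show ?thesis using r Cons by (auto simp: push_def)
  qed
qed

lemma foldr_push_red: "red r \<Longrightarrow> red (foldr push xs r)"
  by (induction xs) (auto simp: push_red)

lemma foldr_push_fr: "red r \<Longrightarrow> foldr push (free_reduce xs) r = foldr push xs r"
proof (induction xs)
  case Nil then show ?case by simp
next
  case (Cons x xs)
  define R where "R = free_reduce xs"
  have RR: "red R" using fr_red R_def by simp
  have IH: "foldr push R r = foldr push xs r" using Cons R_def by simp
  have "foldr push (push x R) r = push x (foldr push R r)"
  proof (cases R)
    case Nil then show ?thesis by (simp add: push_def)
  next
    case (Cons y ys)
    show ?thesis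
    proof (cases "y = iv x")
      case True
      have "push x (foldr push R r) = push x (push (iv x) (foldr push ys r))"
        using Cons True by simp
      also have "\<dots> = foldr push ys r"
        by (rule push_push_inv[OF foldr_push_red[OF \<open>red r\<close>]])
      finally show ?thesis using Cons True by (simp add: push_def)
    next
      case False then show ?thesis using Cons by (simp add: push_def)
    qed
  qed
  then show ?case using IH R_def by (simp add: fr_Cons)
qed

lemma fr_fr_left: "free_reduce (free_reduce xs @ ys) = free_reduce (xs @ ys)"
  by (simp add: fr_append foldr_push_fr fr_red)

lemma fr_fr_right: "free_reduce (xs @ free_reduce ys) = free_reduce (xs @ ys)"
  by (simp add: fr_append red_fr fr_red)

lemma foldr_inv: "red s \<Longrightarrow> foldr push (rev (map iv w)) (foldr push w s) = s"
proof (induction w arbitrary: s)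
  case Nil then show ?case by simp
next
  case (Cons x w)
  have "foldr push (rev (map iv (x#w))) (foldr push (x#w) s)
      = foldr push (rev (map iv w)) (push (iv x) (push x (foldr push w s)))" by simp
  also have "push (iv x) (push x (foldr push w s)) = foldr push w s"
    using push_push_inv[of "foldr push w s" "iv x"] foldr_push_red[OF Cons.prems] by simp
  finally show ?case using Cons by simp
qed

lemma fr_inv_left: "free_reduce (rev (map iv w) @ w) = []"
proof -
  have "free_reduce (rev (map iv w) @ w) = foldr push (rev (map iv w)) (foldr push w [])"
    using fr_append[of _ "w @ []"] fr_append[of "rev (map iv w)" w] fr_append[of w "[]"]
    by (simp add: fr_append)
  also have "\<dots> = []" by (rule foldr_inv) simp
  finally show ?thesis .
qed

lemma F2_carrier: "carrier F2 = {w. red w}" by (simp add: F2_def fr_eq_iff)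
lemma F2_mult: "x \<otimes>\<^bsub>F2\<^esub> y = free_reduce (x @ y)" by (simp add: F2_def)
lemma F2_one: "\<one>\<^bsub>F2\<^esub> = []" by (simp add: F2_def)

lemma group_F2: "group F2"
proof (rule groupI)
  show "\<And>x y. x \<in> carrier F2 \<Longrightarrow> y \<in> carrier F2 \<Longrightarrow> x \<otimes>\<^bsub>F2\<^esub> y \<in> carrier F2"
    by (simp add: F2_carrier F2_mult fr_red)
  show "\<one>\<^bsub>F2\<^esub> \<in> carrier F2" by (simp add: F2_carrier F2_one)
  show "\<And>x y z. x \<in> carrier F2 \<Longrightarrow> y \<in> carrier F2 \<Longrightarrow> z \<in> carrier F2 \<Longrightarrow>
     x \<otimes>\<^bsub>F2\<^esub> y \<otimes>\<^bsub>F2\<^esub> z = x \<otimes>\<^bsub>F2\<^esub> (y \<otimes>\<^bsub>F2\<^esub> z)"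
    by (simp add: F2_mult fr_fr_left fr_fr_right)
  show "\<And>x. x \<in> carrier F2 \<Longrightarrow> \<one>\<^bsub>F2\<^esub> \<otimes>\<^bsub>F2\<^esub> x = x"
    by (simp add: F2_carrier F2_mult F2_one red_fr)
  show "\<And>x. x \<in> carrier F2 \<Longrightarrow> \<exists>y\<in>carrier F2. y \<otimes>\<^bsub>F2\<^esub> x = \<one>\<^bsub>F2\<^esub>"
  proof -
    fix x assume "x \<in> carrier F2"
    show "\<exists>y\<in>carrier F2. y \<otimes>\<^bsub>F2\<^esub> x = \<one>\<^bsub>F2\<^esub>"
      by (rule bexI[of _ "free_reduce (rev (map iv x))"])
         (simp_all add: F2_carrier F2_mult F2_one fr_red fr_fr_left fr_inv_left)
  qed
qed


definition lv :: "('h,'m) monoid_scheme \<Rightarrow> (bool \<Rightarrow> 'h) \<Rightarrow> bool \<times> bool \<Rightarrow> 'h" where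
  "lv H f x = (if snd x then inv\<^bsub>H\<^esub> (f (fst x)) else f (fst x))"

definition ext :: "('h,'m) monoid_scheme \<Rightarrow> (bool \<Rightarrow> 'h) \<Rightarrow> (bool \<times> bool) list \<Rightarrow> 'h" where
  "ext H f w = foldr (\<lambda>x acc. lv H f x \<otimes>\<^bsub>H\<^esub> acc) w \<one>\<^bsub>H\<^esub>"

lemma ext_Nil[simp]: "ext H f [] = \<one>\<^bsub>H\<^esub>" by (simp add: ext_def)
lemma ext_Cons: "ext H f (x#w) = lv H f x \<otimes>\<^bsub>H\<^esub> ext H f w" by (simp add: ext_def)

context group
begin

lemma lv_carrier: "range f \<subseteq> carrier G \<Longrightarrow> lv G f x \<in> carrier G"
  by (auto simp: lv_def)

lemma ext_carrier: "range f \<subseteq> carrier G \<Longrightarrow> ext G f w \<in> carrier G"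
  by (induction w) (auto simp: ext_Cons lv_carrier)

lemma lv_iv: "range f \<subseteq> carrier G \<Longrightarrow> lv G f x \<otimes> lv G f (iv x) = \<one>"
proof -
  assume "range f \<subseteq> carrier G"
  then have "f (fst x) \<in> carrier G" by auto
  then show ?thesis by (auto simp: lv_def iv_def)
qed

lemma ext_push: assumes "range f \<subseteq> carrier G"
  shows "ext G f (push x r) = lv G f x \<otimes> ext G f r"
proof (cases r)
  case Nil then show ?thesis by (simp add: push_def ext_Cons)
next
  case (Cons y ys)
  show ?thesis
  proof (cases "y = iv x")
    case True
    have "lv G f x \<otimes> ext G f r = (lv G f x \<otimes> lv G f (iv x)) \<otimes> ext G f ys"
      using Cons True assms by (simp add: ext_Cons m_assoc lv_carrier ext_carrier)
    then show ?thesis using Cons True assms by (simp add: push_def lv_iv ext_carrier)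
  next
    case False then show ?thesis using Cons by (simp add: push_def ext_Cons)
  qed
qed

lemma ext_foldr: assumes "range f \<subseteq> carrier G"
  shows "ext G f (foldr push xs r) = ext G f xs \<otimes> ext G f r"
  using assms by (induction xs) (auto simp: ext_push ext_Cons m_assoc lv_carrier ext_carrier)

lemma fr_foldr: "free_reduce w = foldr push w []"
  using fr_append[of w "[]"] by simp

lemma ext_fr: assumes "range f \<subseteq> carrier G"
  shows "ext G f (free_reduce w) = ext G f w"
  using ext_foldr[OF assms, of w "[]"] assms by (simp add: fr_foldr ext_carrier)

lemma ext_append: assumes "range f \<subseteq> carrier G"
  shows "ext G f (u @ v) = ext G f u \<otimes> ext G f v"
  using assms by (induction u) (auto simp: ext_Cons m_assoc lv_carrier ext_carrier)

lemma ext_hom: assumes "range f \<subseteq> carrier G"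
  shows "ext G f \<in> hom F2 G"
  using assms by (auto intro!: homI simp: ext_carrier F2_mult ext_fr ext_append)

end

lemma F2_single: "[x] \<in> carrier F2" by (simp add: F2_carrier)

lemma F2_inv_single: "inv\<^bsub>F2\<^esub> [(t,False)] = [(t,True)]"
  by (rule group.inv_equality[OF group_F2])
     (auto simp: F2_carrier F2_mult F2_one fr_Cons push_def iv_def)

lemma F2_Cons: "red (x#w) \<Longrightarrow> x#w = [x] \<otimes>\<^bsub>F2\<^esub> w"
  by (simp add: F2_mult red_fr)

lemma hom_F2_ext:
  assumes G: "group G" and h: "h \<in> hom F2 G" and w: "w \<in> carrier F2"
  shows "h w = ext G (\<lambda>t. h [(t,False)]) w"
proof -
  interpret group_hom F2 G h using G h group_F2 by (simp add: group_hom_def group_hom_axioms_def)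
  have "red w" using w by (simp add: F2_carrier)
  then show ?thesis
  proof (induction w)
    case Nil then show ?case using F2_one hom_one by auto
  next
    case (Cons x w)
    have rw: "red w" using Cons.prems red_tl by blast
    have lvx: "h [x] = lv G (\<lambda>t. h [(t,False)]) x"
    proof (cases "snd x")
      case True
      then have "[x] = inv\<^bsub>F2\<^esub> [(fst x, False)]" using F2_inv_single[of "fst x"]
        by (cases x) auto
      then show ?thesis using True by (simp add: lv_def F2_single)
    next
      case False then show ?thesis by (cases x) (simp add: lv_def)
    qed
    have "h (x#w) = h [x] \<otimes>\<^bsub>G\<^esub> h w"
      using F2_Cons[OF Cons.prems] rw by (simp add: F2_single F2_carrier)
    then show ?case using Cons.IH[OF rw] lvx by (simp add: ext_Cons)
  qed
qed

lemma hom_F2_eq: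
  assumes G: "group G" and h: "h \<in> hom F2 G" and g: "g \<in> hom F2 G"
    and eq: "\<And>t. h [(t,False)] = g [(t,False)]" and w: "w \<in> carrier F2"
  shows "h w = g w"
  using hom_F2_ext[OF G h w] hom_F2_ext[OF G g w] eq by simp


definition winv :: "(bool \<times> bool) list \<Rightarrow> (bool \<times> bool) list" where
  "winv w = rev (map iv w)"

lemma iv_inj[simp]: "iv a = iv b \<longleftrightarrow> a = b" by (metis iv_iv)
lemma iv_pair[simp]: "iv (a,b) = (a, \<not> b)" by (simp add: iv_def)

lemma red_append: "red (xs @ ys) \<longleftrightarrow> red xs \<and> red ys \<and> (xs = [] \<or> ys = [] \<or> hd ys \<noteq> iv (last xs))"
proof (induction xs)
  case Nil then show ?case by simp
next
  case (Cons x xs)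
  show ?case
  proof (cases xs)
    case Nil then show ?thesis by (cases ys) auto
  next
    case (Cons y zs)
    then show ?thesis using Cons.IH by auto
  qed
qed

lemma iv_eqD: "iv a = b \<Longrightarrow> a = iv b" by auto

lemma red_Cons: "red (x # ys) \<longleftrightarrow> red ys \<and> (ys = [] \<or> hd ys \<noteq> iv x)"
  by (cases ys) auto

lemma winv_Nil[simp]: "winv [] = []" and winv_Cons: "winv (x#w) = winv w @ [iv x]"
  by (auto simp: winv_def)

lemma winv_eq_Nil[simp]: "winv w = [] \<longleftrightarrow> w = []" by (simp add: winv_def)

lemma hd_winv: "w \<noteq> [] \<Longrightarrow> hd (winv w) = iv (last w)"
  by (simp add: winv_def hd_rev last_map)
lemma last_winv: "w \<noteq> [] \<Longrightarrow> last (winv w) = iv (hd w)"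
  by (simp add: winv_def last_rev hd_map)

lemma red_winv: "red w \<Longrightarrow> red (winv w)"
proof (induction w)
  case Nil then show ?case by simp
next
  case (Cons x w)
  have "red w" using Cons.prems red_tl by blast
  then show ?case using Cons by (cases w) (auto simp: winv_Cons red_append hd_winv last_winv)
qed

lemma F2_inv: assumes "red w" shows "inv\<^bsub>F2\<^esub> w = winv w"
  by (rule group.inv_equality[OF group_F2])
     (use assms red_winv[OF assms, unfolded winv_def] in \<open>auto simp: F2_carrier F2_mult F2_one fr_inv_left winv_def\<close>)

lemma F2_red_mult: "red (u @ v) \<Longrightarrow> u \<otimes>\<^bsub>F2\<^esub> v = u @ v"
  by (simp add: F2_mult red_fr)

section \<open>Injectivity of substitutions\<close>

definition Lw :: "(bool \<Rightarrow> (bool \<times> bool) list) \<Rightarrow> bool \<times> bool \<Rightarrow> (bool \<times> bool) list" where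
  "Lw S x = (if snd x then winv (S (fst x)) else S (fst x))"

lemma lv_F2: "(\<And>t. red (S t)) \<Longrightarrow> lv F2 S x = Lw S x"
  by (simp add: lv_def Lw_def F2_inv)

lemma Lw_red: "(\<And>t. red (S t)) \<Longrightarrow> red (Lw S x)"
  by (simp add: Lw_def red_winv)

lemma Lw_ne: "(\<And>t. S t \<noteq> []) \<Longrightarrow> Lw S x \<noteq> []"
  by (simp add: Lw_def)

lemma ext_concat:
  assumes r: "\<And>t. red (S t)" and ne: "\<And>t. S t \<noteq> []"
    and cond: "\<And>x y. y \<noteq> iv x \<Longrightarrow> hd (Lw S y) \<noteq> iv (last (Lw S x))"
    and w: "red w" "w \<noteq> []"
  shows "ext F2 S w = concat (map (Lw S) w) \<and> red (concat (map (Lw S) w))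
     \<and> concat (map (Lw S) w) \<noteq> [] \<and> hd (concat (map (Lw S) w)) = hd (Lw S (hd w))"
  using w
proof (induction w)
  case Nil then show ?case by simp
next
  case (Cons x w)
  have rS: "range S \<subseteq> carrier F2" using r by (auto simp: F2_carrier)
  show ?case
  proof (cases "w = []")
    case True
    then show ?thesis using r ne
      by (simp add: ext_Cons lv_F2 F2_one Lw_red Lw_ne F2_mult red_fr)
  next
    case False
    have rw: "red w" using Cons.prems red_tl by blast
    have IH: "ext F2 S w = concat (map (Lw S) w)" "red (concat (map (Lw S) w))"
      "concat (map (Lw S) w) \<noteq> []" "hd (concat (map (Lw S) w)) = hd (Lw S (hd w))"
      using Cons.IH[OF rw False] by auto
    have "hd w \<noteq> iv x" using Cons.prems False by (cases w) auto
    then have c: "hd (Lw S (hd w)) \<noteq> iv (last (Lw S x))" using cond by blast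
    have rc: "red (Lw S x @ concat (map (Lw S) w))"
      using IH c by (simp add: red_append Lw_red[OF r] Lw_ne[OF ne])
    show ?thesis
      using IH rc r ne by (simp add: ext_Cons lv_F2 F2_red_mult Lw_ne)
  qed
qed

lemma subst_inj:
  assumes r: "\<And>t. red (S t)" and ne: "\<And>t. S t \<noteq> []"
    and cond: "\<And>x y. y \<noteq> iv x \<Longrightarrow> hd (Lw S y) \<noteq> iv (last (Lw S x))"
  shows "inj_on (ext F2 S) (carrier F2)"
proof -
  have rS: "range S \<subseteq> carrier F2" using r by (auto simp: F2_carrier)
  interpret group_hom F2 F2 "ext F2 S"
    using group_F2 group.ext_hom[OF group_F2 rS] by (simp add: group_hom_def group_hom_axioms_def)
  have "kernel F2 F2 (ext F2 S) = {\<one>\<^bsub>F2\<^esub>}"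
  proof -
    { fix w assume "w \<in> carrier F2" "ext F2 S w = []" "w \<noteq> []"
      then have False using ext_concat[OF r ne cond, of w] by (auto simp: F2_carrier) }
    then show ?thesis unfolding kernel_def by (auto simp: F2_one F2_carrier)
  qed
  then show ?thesis using inj_iff_trivial_ker by simp
qed

lemma subst_cond:
  assumes "u \<noteq> []" "v \<noteq> []"
    and "hd u \<noteq> iv (last u)" "hd v \<noteq> iv (last v)" "hd u \<noteq> hd v" "last u \<noteq> last v"
        "hd v \<noteq> iv (last u)" "hd u \<noteq> iv (last v)"
    and "y \<noteq> iv x"
  shows "hd (Lw (\<lambda>t. if t then u else v) y) \<noteq> iv (last (Lw (\<lambda>t. if t then u else v) x))"
  using assms
  apply (cases x; cases y)
  apply (auto simp: Lw_def hd_winv last_winv split: if_splits)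
  done


section \<open>Cyclic reduction\<close>

definition cyc :: "(bool \<times> bool) list \<Rightarrow> bool" where
  "cyc c \<longleftrightarrow> red c \<and> c \<noteq> [] \<and> hd c \<noteq> iv (last c)"

lemma F2_conj_single:
  assumes "red ([x] @ m @ [iv x])"
  shows "inv\<^bsub>F2\<^esub> [x] \<otimes>\<^bsub>F2\<^esub> ([x] @ m @ [iv x]) \<otimes>\<^bsub>F2\<^esub> [x] = m"
proof -
  have rm: "red m" using assms by (simp add: red_append red_Cons)
  have "inv\<^bsub>F2\<^esub> [x] = [iv x]" using F2_inv[of "[x]"] by (simp add: winv_def)
  then have "inv\<^bsub>F2\<^esub> [x] \<otimes>\<^bsub>F2\<^esub> ([x] @ m @ [iv x]) \<otimes>\<^bsub>F2\<^esub> [x]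
     = free_reduce ([iv x, x] @ m @ [iv x, x])"
    by (simp add: F2_mult fr_fr_left)
  also have "\<dots> = foldr push [iv x, x] (free_reduce (m @ [iv x, x]))"
    by (simp only: fr_append)
  also have "free_reduce (m @ [iv x, x]) = m"
  proof -
    have "free_reduce (m @ [iv x, x]) = free_reduce (m @ free_reduce [iv x, x])"
      by (simp only: fr_fr_right)
    also have "free_reduce [iv x, x] = []" by (simp add: fr_Cons push_def)
    finally show ?thesis using rm by (simp add: red_fr)
  qed
  also have "foldr push [iv x, x] m = m"
    using push_push_inv[OF rm, of "iv x"] by simp
  finally show ?thesis .
qed

lemma cyc_conj: "red w \<Longrightarrow> w \<noteq> [] \<Longrightarrow> \<exists>g\<in>carrier F2. cyc (inv\<^bsub>F2\<^esub> g \<otimes>\<^bsub>F2\<^esub> w \<otimes>\<^bsub>F2\<^esub> g)"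
proof (induction "length w" arbitrary: w rule: less_induct)
  case less
  interpret F: group F2 by (rule group_F2)
  have wc: "w \<in> carrier F2" using less.prems by (simp add: F2_carrier)
  show ?case
  proof (cases "hd w = iv (last w)")
    case False
    then have "cyc w" using less.prems by (simp add: cyc_def)
    then show ?thesis using wc by (intro bexI[of _ "\<one>\<^bsub>F2\<^esub>"]) auto
  next
    case True
    obtain x w1 where w1: "w = x # w1" using less.prems by (cases w) auto
    have "w1 \<noteq> []" using True w1 by auto
    then obtain m y where my: "w1 = m @ [y]" by (metis rev_exhaust)
    have y: "y = iv x" using True w1 my by simp
    have wf: "w = [x] @ m @ [iv x]" using w1 my y by simp
    have "m \<noteq> []" using less.prems wf by auto
    have rm: "red m" using less.prems wf by (simp add: red_append red_Cons)
    have "length m < length w" using wf by simp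
    then obtain g' where g': "g' \<in> carrier F2" "cyc (inv\<^bsub>F2\<^esub> g' \<otimes>\<^bsub>F2\<^esub> m \<otimes>\<^bsub>F2\<^esub> g')"
      using less.hyps rm \<open>m \<noteq> []\<close> by blast
    have mc: "m \<in> carrier F2" using rm by (simp add: F2_carrier)
    have xc: "[x] \<in> carrier F2" by (rule F2_single)
    have meq: "m = inv\<^bsub>F2\<^esub> [x] \<otimes>\<^bsub>F2\<^esub> w \<otimes>\<^bsub>F2\<^esub> [x]"
      using F2_conj_single[of x m] less.prems wf by simp
    have "inv\<^bsub>F2\<^esub> ([x] \<otimes>\<^bsub>F2\<^esub> g') \<otimes>\<^bsub>F2\<^esub> w \<otimes>\<^bsub>F2\<^esub> ([x] \<otimes>\<^bsub>F2\<^esub> g')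
        = inv\<^bsub>F2\<^esub> g' \<otimes>\<^bsub>F2\<^esub> m \<otimes>\<^bsub>F2\<^esub> g'"
      using g'(1) xc wc by (simp add: meq F.inv_mult_group F.m_assoc)
    then show ?thesis using g' xc by (intro bexI[of _ "[x] \<otimes>\<^bsub>F2\<^esub> g'"]) auto
  qed
qed

lemma avoid3: "\<exists>x::bool \<times> bool. x \<noteq> p \<and> x \<noteq> q \<and> x \<noteq> r"
proof (rule ccontr)
  assume "\<not> ?thesis"
  then have "UNIV \<subseteq> {p, q, r}" by auto
  then have "card (UNIV :: (bool \<times> bool) set) \<le> card {p,q,r}"
    by (intro card_mono) auto
  also have "card {p,q,r} \<le> 3" by (simp add: card_insert_if)
  finally show False by (simp add: UNIV_Times_UNIV[symmetric] card_cartesian_product del: UNIV_Times_UNIV)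
qed

lemma comm_word:
  assumes "cyc c"
  shows "\<exists>t. c \<otimes>\<^bsub>F2\<^esub> [t] \<otimes>\<^bsub>F2\<^esub> inv\<^bsub>F2\<^esub> c \<otimes>\<^bsub>F2\<^esub> inv\<^bsub>F2\<^esub> [t] \<noteq> []"
proof -
  obtain t where t: "t \<noteq> iv (last c)" "t \<noteq> last c" "t \<noteq> iv (hd c)"
    using avoid3 by blast
  have c: "red c" "c \<noteq> []" using assms by (auto simp: cyc_def)
  have w: "red (c @ [t] @ winv c @ [iv t])"
    using c t red_winv[OF c(1)] by (auto simp: red_append red_Cons hd_winv last_winv dest: iv_eqD)
  have "c \<otimes>\<^bsub>F2\<^esub> [t] \<otimes>\<^bsub>F2\<^esub> inv\<^bsub>F2\<^esub> c \<otimes>\<^bsub>F2\<^esub> inv\<^bsub>F2\<^esub> [t] = free_reduce (c @ [t] @ winv c @ [iv t])"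
    using c F2_inv[of "[t]"] by (simp add: F2_inv F2_mult fr_fr_left winv_def)
  also have "\<dots> = c @ [t] @ winv c @ [iv t]" using w by (rule red_fr)
  finally have "c \<otimes>\<^bsub>F2\<^esub> [t] \<otimes>\<^bsub>F2\<^esub> inv\<^bsub>F2\<^esub> c \<otimes>\<^bsub>F2\<^esub> inv\<^bsub>F2\<^esub> [t] \<noteq> []" by simp
  then show ?thesis by blast
qed

lemma free_pair:
  assumes "cyc d"
  shows "\<exists>g\<in>carrier F2. \<exists>h\<in>carrier F2.
    inj_on (ext F2 (\<lambda>t. if t then g \<otimes>\<^bsub>F2\<^esub> d \<otimes>\<^bsub>F2\<^esub> inv\<^bsub>F2\<^esub> g \<otimes>\<^bsub>F2\<^esub> d
                           else d \<otimes>\<^bsub>F2\<^esub> h \<otimes>\<^bsub>F2\<^esub> d \<otimes>\<^bsub>F2\<^esub> inv\<^bsub>F2\<^esub> h)) (carrier F2)"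
proof -
  have d: "red d" "d \<noteq> []" "hd d \<noteq> iv (last d)" using assms by (auto simp: cyc_def)
  define \<alpha> where "\<alpha> = hd d"
  define \<beta> where "\<beta> = last d"
  obtain s1 where s1: "s1 \<noteq> \<alpha>" "s1 \<noteq> iv \<beta>" "s1 \<noteq> \<alpha>" using avoid3 by blast
  obtain s2 where s2: "s2 \<noteq> iv s1" "s2 \<noteq> iv \<alpha>" "s2 \<noteq> \<beta>" using avoid3 by blast
  obtain h1 where h1: "h1 \<noteq> iv \<beta>" "h1 \<noteq> \<alpha>" "h1 \<noteq> s1" using avoid3 by blast
  obtain h2 where h2: "h2 \<noteq> iv h1" "h2 \<noteq> iv \<alpha>" "h2 \<noteq> \<beta>" using avoid3 by blast
  define u where "u = [s1, s2] @ d @ [iv s2, iv s1] @ d"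
  define v where "v = d @ [h1, h2] @ d @ [iv h2, iv h1]"
  have ru: "red u" using d s1 s2 unfolding u_def \<alpha>_def \<beta>_def
    by (auto simp: red_append red_Cons)
  have rv: "red v" using d h1 h2 unfolding v_def \<alpha>_def \<beta>_def
    by (auto simp: red_append red_Cons)
  have gc: "[s1, s2] \<in> carrier F2" "[h1,h2] \<in> carrier F2" using s2 h2 by (auto simp: F2_carrier)
  have ig: "inv\<^bsub>F2\<^esub> [s1, s2] = [iv s2, iv s1]" "inv\<^bsub>F2\<^esub> [h1, h2] = [iv h2, iv h1]"
    using s2 h2 by (auto simp: F2_inv winv_def)
  have ueq: "[s1, s2] \<otimes>\<^bsub>F2\<^esub> d \<otimes>\<^bsub>F2\<^esub> inv\<^bsub>F2\<^esub> [s1, s2] \<otimes>\<^bsub>F2\<^esub> d = u"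
    using ru unfolding ig by (simp add: F2_mult fr_fr_left red_fr u_def)
  have veq: "d \<otimes>\<^bsub>F2\<^esub> [h1, h2] \<otimes>\<^bsub>F2\<^esub> d \<otimes>\<^bsub>F2\<^esub> inv\<^bsub>F2\<^esub> [h1, h2] = v"
    using rv unfolding ig by (simp add: F2_mult fr_fr_left red_fr v_def)
  have hu: "hd u = s1" "last u = \<beta>" "u \<noteq> []" using d by (auto simp: u_def \<beta>_def)
  have hv: "hd v = \<alpha>" "last v = iv h1" "v \<noteq> []" using d by (auto simp: v_def \<alpha>_def)
  have inj: "inj_on (ext F2 (\<lambda>t. if t then u else v)) (carrier F2)"
  proof (rule subst_inj)
    show "\<And>t. red (if t then u else v)" using ru rv by auto
    show "\<And>t. (if t then u else v) \<noteq> []" using hu hv by auto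
    show "\<And>x y. y \<noteq> iv x \<Longrightarrow> hd (Lw (\<lambda>t. if t then u else v) y) \<noteq> iv (last (Lw (\<lambda>t. if t then u else v) x))"
      by (rule subst_cond) (use hu hv s1 h1 d in \<open>auto simp: \<alpha>_def \<beta>_def\<close>)
  qed
  show ?thesis
    apply (rule bexI[where x="[s1,s2]"])
     apply (rule bexI[where x="[h1,h2]"])
    using inj ueq veq gc by auto
qed

definition ua :: "(bool \<times> bool) list" where "ua = [(True,False),(False,False),(True,True),(False,True)]"
definition vb :: "(bool \<times> bool) list" where "vb = [(True,True),(False,True),(True,False),(False,False)]"

lemma comm_inj: "inj_on (ext F2 (\<lambda>t. if t then ua else vb)) (carrier F2)"
proof (rule subst_inj)
  show "\<And>t. red (if t then ua else vb)" by (auto simp: ua_def vb_def)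
  show "\<And>t. (if t then ua else vb) \<noteq> []" by (auto simp: ua_def vb_def)
  show "\<And>x y. y \<noteq> iv x \<Longrightarrow> hd (Lw (\<lambda>t. if t then ua else vb) y) \<noteq> iv (last (Lw (\<lambda>t. if t then ua else vb) x))"
    by (rule subst_cond) (auto simp: ua_def vb_def)
qed

lemma red_ua_vb: "ua \<in> carrier F2" "vb \<in> carrier F2" by (auto simp: ua_def vb_def F2_carrier)


abbreviation P :: "nat \<Rightarrow> (nat \<Rightarrow> (bool \<times> bool) list) monoid" where
  "P n \<equiv> product_group {..<n} (\<lambda>_. F2)"

lemma group_P: "group (P n)" by (simp add: group_F2)

definition e :: "nat \<Rightarrow> nat \<Rightarrow> (bool \<times> bool) list \<Rightarrow> nat \<Rightarrow> (bool \<times> bool) list" where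
  "e n j x = (\<lambda>i\<in>{..<n}. if i = j then x else [])"

lemma F2_one_carrier: "[] \<in> carrier F2" by (simp add: F2_carrier)

lemma e_carrier: "x \<in> carrier F2 \<Longrightarrow> e n j x \<in> carrier (P n)"
  by (auto simp: e_def F2_one_carrier)

lemma e_hom: "e n j \<in> hom F2 (P n)"
proof (rule homI)
  fix x y assume "x \<in> carrier F2" "y \<in> carrier F2"
  show "e n j (x \<otimes>\<^bsub>F2\<^esub> y) = e n j x \<otimes>\<^bsub>P n\<^esub> e n j y"
    by (auto simp: e_def F2_mult intro!: restrict_ext)
qed (rule e_carrier)

lemma e_inj: "j < n \<Longrightarrow> e n j x = e n j y \<Longrightarrow> x = y"
  by (drule fun_cong[of _ _ j]) (simp add: e_def)

lemma embeds1:
  assumes "\<rho> \<in> hom F2 N" "inj_on \<rho> (carrier F2)"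
  shows "F2_power_embeds 1 N"
  unfolding F2_power_embeds_def
proof (intro exI conjI)
  show "(\<lambda>x. \<rho> (x 0)) \<in> hom (P 1) N"
  proof (rule homI)
    fix x y assume "x \<in> carrier (P 1)" "y \<in> carrier (P 1)"
    then have "x 0 \<in> carrier F2" "y 0 \<in> carrier F2" by (auto simp: PiE_iff)
    then show "\<rho> ((x \<otimes>\<^bsub>P 1\<^esub> y) 0) = \<rho> (x 0) \<otimes>\<^bsub>N\<^esub> \<rho> (y 0)"
      using assms(1) by (simp add: hom_def)
  next
    fix x assume "x \<in> carrier (P 1)"
    then have "x 0 \<in> carrier F2" by (auto simp: PiE_iff)
    then show "\<rho> (x 0) \<in> carrier N" using assms(1) by (auto simp: hom_def)
  qed
  show "inj_on (\<lambda>x. \<rho> (x 0)) (carrier (P 1))"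
  proof (rule inj_onI)
    fix x y assume xy: "x \<in> carrier (P 1)" "y \<in> carrier (P 1)" "\<rho> (x 0) = \<rho> (y 0)"
    then have "x 0 = y 0" using assms(2) by (auto dest: inj_onD)
    have x1: "x \<in> (\<Pi>\<^sub>E i\<in>{..<1::nat}. carrier F2)" and y1: "y \<in> (\<Pi>\<^sub>E i\<in>{..<1::nat}. carrier F2)"
      using xy(1,2) by simp_all
    show "x = y"
    proof (rule PiE_ext[OF x1 y1])
      fix i :: nat assume "i \<in> {..<1}"
      then have "i = 0" by simp
      then show "x i = y i" using \<open>x 0 = y 0\<close> by simp
    qed
  qed
qed

lemma (in group) cancel_l[simp]:
  "x \<in> carrier G \<Longrightarrow> y \<in> carrier G \<Longrightarrow> x \<otimes> (inv x \<otimes> y) = y"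
  "x \<in> carrier G \<Longrightarrow> y \<in> carrier G \<Longrightarrow> inv x \<otimes> (x \<otimes> y) = y"
  by (simp_all add: m_assoc[symmetric])

lemma (in group) conj_comm:
  assumes "g \<in> carrier G" "c \<in> carrier G" "t \<in> carrier G"
  shows "(g \<otimes> c \<otimes> inv g) \<otimes> (g \<otimes> t \<otimes> inv g) \<otimes> inv (g \<otimes> c \<otimes> inv g) \<otimes> inv (g \<otimes> t \<otimes> inv g)
     = g \<otimes> (c \<otimes> t \<otimes> inv c \<otimes> inv t) \<otimes> inv g"
  using assms by (simp add: inv_mult_group m_assoc)

lemma (in group) conj_back:
  assumes "g \<in> carrier G" "w \<in> carrier G"
  shows "g \<otimes> (inv g \<otimes> w \<otimes> g) \<otimes> inv g = w"
  using assms by (simp add: m_assoc)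

lemma (in group) conj_one:
  assumes "g \<in> carrier G" "z \<in> carrier G" "g \<otimes> z \<otimes> inv g = \<one>"
  shows "z = \<one>"
proof -
  have "z = inv g \<otimes> (g \<otimes> z \<otimes> inv g) \<otimes> g" using assms(1,2) by (simp add: m_assoc)
  also have "\<dots> = \<one>" unfolding assms(3) using assms(1) by simp
  finally show ?thesis .
qed

lemma comm_e:
  assumes k: "k \<in> carrier (P n)" and y: "y \<in> carrier F2" and j: "j < n"
  shows "k \<otimes>\<^bsub>P n\<^esub> e n j y \<otimes>\<^bsub>P n\<^esub> inv\<^bsub>P n\<^esub> k \<otimes>\<^bsub>P n\<^esub> inv\<^bsub>P n\<^esub> (e n j y)
    = e n j (k j \<otimes>\<^bsub>F2\<^esub> y \<otimes>\<^bsub>F2\<^esub> inv\<^bsub>F2\<^esub> (k j) \<otimes>\<^bsub>F2\<^esub> inv\<^bsub>F2\<^esub> y)"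
proof -
  interpret F: group F2 by (rule group_F2)
  have ey: "e n j y \<in> (\<Pi>\<^sub>E i\<in>{..<n}. carrier F2)" using e_carrier[OF y] by simp
  have kk: "k \<in> (\<Pi>\<^sub>E i\<in>{..<n}. carrier F2)" using k by simp
  have ik: "inv\<^bsub>P n\<^esub> k = (\<lambda>i\<in>{..<n}. inv\<^bsub>F2\<^esub> k i)"
    using kk inv_product_group[of k "{..<n}" "\<lambda>_. F2"] group_F2 by blast
  have iey: "inv\<^bsub>P n\<^esub> (e n j y) = (\<lambda>i\<in>{..<n}. inv\<^bsub>F2\<^esub> (e n j y i))"
    using ey inv_product_group[of "e n j y" "{..<n}" "\<lambda>_. F2"] group_F2 by blast
  have m: "\<And>a b. a \<otimes>\<^bsub>P n\<^esub> b = (\<lambda>i\<in>{..<n}. a i \<otimes>\<^bsub>F2\<^esub> b i)" by simp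
  show ?thesis
  proof (rule ext)
    fix i
    show "(k \<otimes>\<^bsub>P n\<^esub> e n j y \<otimes>\<^bsub>P n\<^esub> inv\<^bsub>P n\<^esub> k \<otimes>\<^bsub>P n\<^esub> inv\<^bsub>P n\<^esub> (e n j y)) i
      = e n j (k j \<otimes>\<^bsub>F2\<^esub> y \<otimes>\<^bsub>F2\<^esub> inv\<^bsub>F2\<^esub> (k j) \<otimes>\<^bsub>F2\<^esub> inv\<^bsub>F2\<^esub> y) i"
    proof (cases "i < n")
      case True
      then have ki: "k i \<in> carrier F2" using kk by auto
      have L: "(k \<otimes>\<^bsub>P n\<^esub> e n j y \<otimes>\<^bsub>P n\<^esub> inv\<^bsub>P n\<^esub> k \<otimes>\<^bsub>P n\<^esub> inv\<^bsub>P n\<^esub> (e n j y)) i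
         = k i \<otimes>\<^bsub>F2\<^esub> e n j y i \<otimes>\<^bsub>F2\<^esub> inv\<^bsub>F2\<^esub> (k i) \<otimes>\<^bsub>F2\<^esub> inv\<^bsub>F2\<^esub> (e n j y i)"
        unfolding m ik iey using True by simp
      show ?thesis
      proof (cases "i = j")
        case True
        then show ?thesis unfolding L using \<open>i < n\<close> by (simp add: e_def)
      next
        case False
        have "k i \<otimes>\<^bsub>F2\<^esub> \<one>\<^bsub>F2\<^esub> \<otimes>\<^bsub>F2\<^esub> inv\<^bsub>F2\<^esub> (k i) \<otimes>\<^bsub>F2\<^esub> inv\<^bsub>F2\<^esub> \<one>\<^bsub>F2\<^esub> = \<one>\<^bsub>F2\<^esub>"
          using ki by simp
        then show ?thesis unfolding L using \<open>i < n\<close> False by (simp add: e_def F2_one)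
      qed
    next
      case False then show ?thesis by (simp add: e_def)
    qed
  qed
qed


lemma ext_gen: "group H \<Longrightarrow> range S \<subseteq> carrier H \<Longrightarrow> ext H S [(t,False)] = S t"
  by (auto simp: ext_Cons lv_def intro: monoid.r_one[OF group.is_monoid])

lemma const_hom: "group H \<Longrightarrow> (\<lambda>_. \<one>\<^bsub>H\<^esub>) \<in> hom F2 H"
  by (rule homI) (simp_all add: monoid.one_closed[OF group.is_monoid] monoid.l_one[OF group.is_monoid])

lemma main_inj:
  assumes se: "short_exact N G Q i p" and noN: "\<not> F2_power_embeds 1 N"
    and h: "h \<in> hom (P n) G" and hi: "inj_on h (carrier (P n))"
  shows "inj_on (p \<circ> h) (carrier (P n))"
proof -
  from se have grp: "group N" "group G" "group Q" and i: "i \<in> hom N G" "inj_on i (carrier N)"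
    and p: "p \<in> hom G Q" and ker: "i ` carrier N = kernel G Q p" by (auto simp: short_exact_def)
  interpret F: group F2 by (rule group_F2)
  interpret PN: group "P n" by (rule group_P)
  interpret GG: group G by fact
  interpret QQ: group Q by fact
  interpret NN: group N by fact
  have ph: "p \<circ> h \<in> hom (P n) Q" using h p by (rule hom_compose)
  interpret PH: group_hom "P n" Q "p \<circ> h"
    using ph by (simp add: group_hom_def group_hom_axioms_def group_P grp)
  show ?thesis
  proof (rule ccontr)
    assume "\<not> ?thesis"
    then have "kernel (P n) Q (p \<circ> h) \<noteq> {\<one>\<^bsub>P n\<^esub>}" using PH.inj_iff_trivial_ker by simp
    moreover have "\<one>\<^bsub>P n\<^esub> \<in> kernel (P n) Q (p \<circ> h)"
      unfolding kernel_def using PN.one_closed PH.hom_one by blast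
    ultimately obtain k where "k \<in> kernel (P n) Q (p \<circ> h)" "k \<noteq> \<one>\<^bsub>P n\<^esub>"
      by blast
    then have k: "k \<in> carrier (P n)" "p (h k) = \<one>\<^bsub>Q\<^esub>" "k \<noteq> \<one>\<^bsub>P n\<^esub>"
      unfolding kernel_def by auto
    obtain j where j: "j < n" "k j \<noteq> []"
    proof -
      have "\<exists>j<n. k j \<noteq> []"
      proof (rule ccontr)
        assume "\<not> (\<exists>j<n. k j \<noteq> [])"
        then have "k = \<one>\<^bsub>P n\<^esub>" using k(1) by (auto simp: F2_one PiE_iff extensional_def intro!: ext)
        then show False using k(3) by simp
      qed
      then show ?thesis using that by blast
    qed
    define w where "w = k j"
    have wc: "w \<in> carrier F2" using k(1) j(1) by (auto simp: w_def PiE_iff)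
    have w: "red w" "w \<noteq> []" using wc j(2) by (auto simp: w_def F2_carrier)
    obtain g where g: "g \<in> carrier F2" "cyc (inv\<^bsub>F2\<^esub> g \<otimes>\<^bsub>F2\<^esub> w \<otimes>\<^bsub>F2\<^esub> g)"
      using cyc_conj[OF w] by blast
    define c where "c = inv\<^bsub>F2\<^esub> g \<otimes>\<^bsub>F2\<^esub> w \<otimes>\<^bsub>F2\<^esub> g"
    have cc: "c \<in> carrier F2" using g wc by (simp add: c_def)
    obtain t where t: "c \<otimes>\<^bsub>F2\<^esub> [t] \<otimes>\<^bsub>F2\<^esub> inv\<^bsub>F2\<^esub> c \<otimes>\<^bsub>F2\<^esub> inv\<^bsub>F2\<^esub> [t] \<noteq> []"
      using comm_word g(2) unfolding c_def by blast
    define y where "y = g \<otimes>\<^bsub>F2\<^esub> [t] \<otimes>\<^bsub>F2\<^esub> inv\<^bsub>F2\<^esub> g"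
    have yc: "y \<in> carrier F2" using g by (simp add: y_def F2_single)
    define D where "D = w \<otimes>\<^bsub>F2\<^esub> y \<otimes>\<^bsub>F2\<^esub> inv\<^bsub>F2\<^esub> w \<otimes>\<^bsub>F2\<^esub> inv\<^bsub>F2\<^esub> y"
    have Dc: "D \<in> carrier F2" using wc yc by (simp add: D_def)
    have wg: "w = g \<otimes>\<^bsub>F2\<^esub> c \<otimes>\<^bsub>F2\<^esub> inv\<^bsub>F2\<^esub> g"
      using F.conj_back[OF g(1) wc] by (simp add: c_def)
    have "D = g \<otimes>\<^bsub>F2\<^esub> (c \<otimes>\<^bsub>F2\<^esub> [t] \<otimes>\<^bsub>F2\<^esub> inv\<^bsub>F2\<^esub> c \<otimes>\<^bsub>F2\<^esub> inv\<^bsub>F2\<^esub> [t]) \<otimes>\<^bsub>F2\<^esub> inv\<^bsub>F2\<^esub> g"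
      unfolding D_def y_def wg by (rule F.conj_comm[OF g(1) cc F2_single])
    then have Dne: "D \<noteq> []"
      using F.conj_one[OF g(1), of "c \<otimes>\<^bsub>F2\<^esub> [t] \<otimes>\<^bsub>F2\<^esub> inv\<^bsub>F2\<^esub> c \<otimes>\<^bsub>F2\<^esub> inv\<^bsub>F2\<^esub> [t]"] t cc
      by (auto simp: F2_one F2_single)
    define \<phi> where "\<phi> = p \<circ> h \<circ> e n j"
    have phi: "\<phi> \<in> hom F2 Q" unfolding \<phi>_def using e_hom ph by (rule hom_compose)
    interpret PHI: group_hom F2 Q \<phi>
      using phi by (simp add: group_hom_def group_hom_axioms_def group_F2 grp)
    have eyc: "e n j y \<in> carrier (P n)" by (rule e_carrier[OF yc])
    have "\<phi> D = (p \<circ> h) (k \<otimes>\<^bsub>P n\<^esub> e n j y \<otimes>\<^bsub>P n\<^esub> inv\<^bsub>P n\<^esub> k \<otimes>\<^bsub>P n\<^esub> inv\<^bsub>P n\<^esub> (e n j y))"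
      using comm_e[OF k(1) yc j(1)] by (simp add: \<phi>_def D_def w_def)
    also have "\<dots> = \<one>\<^bsub>Q\<^esub>"
    proof -
      have a: "(p \<circ> h) (e n j y) \<in> carrier Q" using eyc by (rule PH.hom_closed)
      have k1: "(p \<circ> h) k = \<one>\<^bsub>Q\<^esub>" using k(2) by simp
      show ?thesis using k(1) eyc a
        by (simp add: PH.hom_mult PH.hom_inv k1 del: mult_product_group inv_product_group
            one_product_group carrier_product_group comp_apply)
    qed
    finally have phiD: "\<phi> D = \<one>\<^bsub>Q\<^esub>" .
    have rD: "red D" using Dc by (simp add: F2_carrier)
    obtain g2 where g2: "g2 \<in> carrier F2" "cyc (inv\<^bsub>F2\<^esub> g2 \<otimes>\<^bsub>F2\<^esub> D \<otimes>\<^bsub>F2\<^esub> g2)"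
      using cyc_conj[OF rD Dne] by blast
    define d where "d = inv\<^bsub>F2\<^esub> g2 \<otimes>\<^bsub>F2\<^esub> D \<otimes>\<^bsub>F2\<^esub> g2"
    have dc: "d \<in> carrier F2" using g2 Dc by (simp add: d_def)
    have phid: "\<phi> d = \<one>\<^bsub>Q\<^esub>" using g2 Dc phiD by (simp add: d_def)
    obtain gg hh where gg: "gg \<in> carrier F2" and hh: "hh \<in> carrier F2" and
      sinj: "inj_on (ext F2 (\<lambda>t. if t then gg \<otimes>\<^bsub>F2\<^esub> d \<otimes>\<^bsub>F2\<^esub> inv\<^bsub>F2\<^esub> gg \<otimes>\<^bsub>F2\<^esub> d
                           else d \<otimes>\<^bsub>F2\<^esub> hh \<otimes>\<^bsub>F2\<^esub> d \<otimes>\<^bsub>F2\<^esub> inv\<^bsub>F2\<^esub> hh)) (carrier F2)"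
      using free_pair[OF g2(2)[folded d_def]] by blast
    define S where "S = (\<lambda>t. if t then gg \<otimes>\<^bsub>F2\<^esub> d \<otimes>\<^bsub>F2\<^esub> inv\<^bsub>F2\<^esub> gg \<otimes>\<^bsub>F2\<^esub> d
                           else d \<otimes>\<^bsub>F2\<^esub> hh \<otimes>\<^bsub>F2\<^esub> d \<otimes>\<^bsub>F2\<^esub> inv\<^bsub>F2\<^esub> hh)"
    have Sc: "range S \<subseteq> carrier F2" using gg hh dc by (auto simp: S_def)
    have phiS: "\<phi> (S t) = \<one>\<^bsub>Q\<^esub>" for t
      using gg hh dc phid by (simp add: S_def)
    define \<sigma> where "\<sigma> = ext F2 S"
    have sig: "\<sigma> \<in> hom F2 F2" unfolding \<sigma>_def by (rule F.ext_hom[OF Sc])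
    have sinj': "inj_on \<sigma> (carrier F2)" using sinj by (simp add: \<sigma>_def S_def)
    have triv: "\<phi> (\<sigma> x) = \<one>\<^bsub>Q\<^esub>" if "x \<in> carrier F2" for x
    proof -
      have "(\<phi> \<circ> \<sigma>) x = (\<lambda>_. \<one>\<^bsub>Q\<^esub>) x"
      proof (rule hom_F2_eq[OF grp(3) hom_compose[OF sig phi] const_hom[OF grp(3)] _ that])
        fix t show "(\<phi> \<circ> \<sigma>) [(t, False)] = \<one>\<^bsub>Q\<^esub>"
          using ext_gen[OF group_F2 Sc] phiS by (simp add: \<sigma>_def)
      qed
      then show ?thesis by simp
    qed
    define \<rho> where "\<rho> x = inv_into (carrier N) i (h (e n j (\<sigma> x)))" for x
    have inK: "h (e n j (\<sigma> x)) \<in> i ` carrier N" if "x \<in> carrier F2" for x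
    proof -
      have "\<sigma> x \<in> carrier F2" using sig that by (rule hom_in_carrier)
      then have "h (e n j (\<sigma> x)) \<in> carrier G" using hom_in_carrier[OF h e_carrier] by blast
      then show ?thesis using triv[OF that] unfolding ker kernel_def by (simp add: \<phi>_def)
    qed
    have rho: "\<rho> x \<in> carrier N" "i (\<rho> x) = h (e n j (\<sigma> x))" if "x \<in> carrier F2" for x
      using inK[OF that] by (auto simp: \<rho>_def inv_into_into f_inv_into_f)
    have rhohom: "\<rho> \<in> hom F2 N"
    proof (rule homI)
      fix x assume "x \<in> carrier F2" then show "\<rho> x \<in> carrier N" by (rule rho(1))
    next
      fix x y assume xy: "x \<in> carrier F2" "y \<in> carrier F2"
      have sx: "\<sigma> x \<in> carrier F2" "\<sigma> y \<in> carrier F2" using sig xy by (auto intro: hom_in_carrier)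
      have "i (\<rho> (x \<otimes>\<^bsub>F2\<^esub> y)) = h (e n j (\<sigma> (x \<otimes>\<^bsub>F2\<^esub> y)))" using rho(2) xy by simp
      also have "\<dots> = h (e n j (\<sigma> x)) \<otimes>\<^bsub>G\<^esub> h (e n j (\<sigma> y))"
      proof -
        have "\<sigma> (x \<otimes>\<^bsub>F2\<^esub> y) = \<sigma> x \<otimes>\<^bsub>F2\<^esub> \<sigma> y" using sig xy by (simp add: hom_mult)
        moreover have "e n j (\<sigma> x \<otimes>\<^bsub>F2\<^esub> \<sigma> y) = e n j (\<sigma> x) \<otimes>\<^bsub>P n\<^esub> e n j (\<sigma> y)"
          using hom_mult[OF e_hom sx] .
        moreover have "h (e n j (\<sigma> x) \<otimes>\<^bsub>P n\<^esub> e n j (\<sigma> y)) = h (e n j (\<sigma> x)) \<otimes>\<^bsub>G\<^esub> h (e n j (\<sigma> y))"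
          using hom_mult[OF h e_carrier[OF sx(1)] e_carrier[OF sx(2)]] .
        ultimately show ?thesis by simp
      qed
      also have "\<dots> = i (\<rho> x \<otimes>\<^bsub>N\<^esub> \<rho> y)"
        using rho xy i(1) by (simp add: hom_mult)
      finally show "\<rho> (x \<otimes>\<^bsub>F2\<^esub> y) = \<rho> x \<otimes>\<^bsub>N\<^esub> \<rho> y"
        using i(2) rho(1) xy by (auto dest: inj_onD)
    qed
    have rhoinj: "inj_on \<rho> (carrier F2)"
    proof (rule inj_onI)
      fix x y assume xy: "x \<in> carrier F2" "y \<in> carrier F2" "\<rho> x = \<rho> y"
      have sx: "\<sigma> x \<in> carrier F2" "\<sigma> y \<in> carrier F2" using sig xy by (auto intro: hom_in_carrier)
      have "h (e n j (\<sigma> x)) = h (e n j (\<sigma> y))" using rho(2) xy by metis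
      then have "e n j (\<sigma> x) = e n j (\<sigma> y)" using inj_onD[OF hi _ e_carrier[OF sx(1)] e_carrier[OF sx(2)]] by blast
      then have "\<sigma> x = \<sigma> y" using e_inj j(1) by blast
      then show "x = y" using sinj' xy by (auto dest: inj_onD)
    qed
    show False using embeds1[OF rhohom rhoinj] noN by simp
  qed
qed


definition cntrl :: "('a,'m) monoid_scheme \<Rightarrow> 'a \<Rightarrow> bool" where
  "cntrl G z \<longleftrightarrow> z \<in> carrier G \<and> (\<forall>g\<in>carrier G. z \<otimes>\<^bsub>G\<^esub> g = g \<otimes>\<^bsub>G\<^esub> z)"

context group begin

lemma ctr_comm_r: assumes "cntrl G z" "g \<in> carrier G" "r \<in> carrier G"
  shows "g \<otimes> (z \<otimes> r) = z \<otimes> (g \<otimes> r)"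
proof -
  have zc: "z \<in> carrier G" and c: "z \<otimes> g = g \<otimes> z" using assms by (auto simp: cntrl_def)
  have "g \<otimes> (z \<otimes> r) = (g \<otimes> z) \<otimes> r" using assms zc by (simp add: m_assoc)
  also have "\<dots> = (z \<otimes> g) \<otimes> r" by (simp only: c)
  also have "\<dots> = z \<otimes> (g \<otimes> r)" using assms zc by (simp add: m_assoc)
  finally show ?thesis .
qed

lemma ctr_mult: assumes z: "cntrl G z" and w: "cntrl G w" shows "cntrl G (z \<otimes> w)"
  unfolding cntrl_def
proof (intro conjI ballI)
  have zc: "z \<in> carrier G" and wc: "w \<in> carrier G" using z w by (auto simp: cntrl_def)
  then show "z \<otimes> w \<in> carrier G" by simp
  fix g assume g: "g \<in> carrier G"
  have c: "w \<otimes> g = g \<otimes> w" using w g by (auto simp: cntrl_def)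
  have "z \<otimes> w \<otimes> g = z \<otimes> (w \<otimes> g)" using zc wc g by (simp add: m_assoc)
  also have "\<dots> = z \<otimes> (g \<otimes> w)" by (simp only: c)
  also have "\<dots> = g \<otimes> (z \<otimes> w)" using ctr_comm_r[OF z g wc] by simp
  finally show "z \<otimes> w \<otimes> g = g \<otimes> (z \<otimes> w)" .
qed

lemma inv_commute: assumes x: "x \<in> carrier G" and y: "y \<in> carrier G" and c: "x \<otimes> y = y \<otimes> x"
  shows "inv x \<otimes> y = y \<otimes> inv x"
proof -
  have "inv x \<otimes> y = inv x \<otimes> (y \<otimes> x) \<otimes> inv x" using x y by (simp add: m_assoc)
  also have "\<dots> = inv x \<otimes> (x \<otimes> y) \<otimes> inv x" by (simp only: c)
  also have "\<dots> = y \<otimes> inv x" using x y by (simp add: m_assoc)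
  finally show ?thesis .
qed

lemma ctr_inv: assumes z: "cntrl G z" shows "cntrl G (inv z)"
  using z inv_commute unfolding cntrl_def by auto

lemma conj_inv_c:
  assumes U: "U \<in> carrier G" and B: "B \<in> carrier G" and z: "cntrl G z"
    and eq: "U \<otimes> B \<otimes> inv U = z \<otimes> B"
  shows "inv U \<otimes> B \<otimes> inv (inv U) = inv z \<otimes> B"
proof -
  have zc: "z \<in> carrier G" using z by (simp add: cntrl_def)
  have "B = inv U \<otimes> (U \<otimes> B \<otimes> inv U) \<otimes> U" using U B by (simp add: m_assoc)
  also have "\<dots> = inv U \<otimes> (z \<otimes> B) \<otimes> U" by (simp only: eq)
  also have "\<dots> = z \<otimes> (inv U \<otimes> (B \<otimes> U))"
    using ctr_comm_r[OF z, of "inv U" "B \<otimes> U"] U B zc by (simp add: m_assoc)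
  finally have "inv z \<otimes> B = inv z \<otimes> (z \<otimes> (inv U \<otimes> (B \<otimes> U)))" by simp
  then have "inv z \<otimes> B = inv U \<otimes> (B \<otimes> U)"
    using U B zc by simp
  then show ?thesis using U B by (simp add: m_assoc)
qed

lemma conj_mult_c:
  assumes U: "U \<in> carrier G" and Y: "Y \<in> carrier G" and B: "B \<in> carrier G"
    and z: "cntrl G z" and w: "cntrl G w"
    and eX: "U \<otimes> B \<otimes> inv U = z \<otimes> B" and eY: "Y \<otimes> B \<otimes> inv Y = w \<otimes> B"
  shows "(U \<otimes> Y) \<otimes> B \<otimes> inv (U \<otimes> Y) = (z \<otimes> w) \<otimes> B"
proof -
  have zc: "z \<in> carrier G" and wc: "w \<in> carrier G" using z w by (auto simp: cntrl_def)
  have "(U \<otimes> Y) \<otimes> B \<otimes> inv (U \<otimes> Y) = U \<otimes> (Y \<otimes> B \<otimes> inv Y) \<otimes> inv U"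
    using U Y B by (simp add: m_assoc inv_mult_group)
  also have "\<dots> = U \<otimes> (w \<otimes> B) \<otimes> inv U" by (simp only: eY)
  also have "\<dots> = w \<otimes> (U \<otimes> B \<otimes> inv U)"
    using ctr_comm_r[OF w U, of "B \<otimes> inv U"] U B wc by (simp add: m_assoc)
  also have "\<dots> = w \<otimes> (z \<otimes> B)" by (simp only: eX)
  also have "\<dots> = (w \<otimes> z) \<otimes> B" using wc zc B by (simp add: m_assoc)
  also have "w \<otimes> z = z \<otimes> w" using z wc by (simp add: cntrl_def)
  finally show ?thesis .
qed

lemma conj_self: "U \<in> carrier G \<Longrightarrow> B \<in> carrier G \<Longrightarrow> U \<otimes> B \<otimes> inv U = (U \<otimes> B \<otimes> inv U \<otimes> inv B) \<otimes> B"
  by (simp add: m_assoc)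

lemma CL:
  assumes X1: "X1 \<in> carrier G" and X2: "X2 \<in> carrier G" and B: "B \<in> carrier G"
    and z1: "cntrl G (X1 \<otimes> B \<otimes> inv X1 \<otimes> inv B)" and z2: "cntrl G (X2 \<otimes> B \<otimes> inv X2 \<otimes> inv B)"
  shows "(X1 \<otimes> X2 \<otimes> inv X1 \<otimes> inv X2) \<otimes> B = B \<otimes> (X1 \<otimes> X2 \<otimes> inv X1 \<otimes> inv X2)"
proof -
  define a where "a = X1 \<otimes> B \<otimes> inv X1 \<otimes> inv B"
  define b where "b = X2 \<otimes> B \<otimes> inv X2 \<otimes> inv B"
  have ac: "a \<in> carrier G" and bc: "b \<in> carrier G" using z1 z2 by (auto simp: cntrl_def a_def b_def)
  have e1: "X1 \<otimes> B \<otimes> inv X1 = a \<otimes> B" using conj_self[OF X1 B] by (simp add: a_def)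
  have e2: "X2 \<otimes> B \<otimes> inv X2 = b \<otimes> B" using conj_self[OF X2 B] by (simp add: b_def)
  have za: "cntrl G a" and zb: "cntrl G b" using z1 z2 by (simp_all add: a_def b_def)
  have e3: "inv X1 \<otimes> B \<otimes> inv (inv X1) = inv a \<otimes> B" by (rule conj_inv_c[OF X1 B za e1])
  have e4: "inv X2 \<otimes> B \<otimes> inv (inv X2) = inv b \<otimes> B" by (rule conj_inv_c[OF X2 B zb e2])
  have e34: "(inv X1 \<otimes> inv X2) \<otimes> B \<otimes> inv (inv X1 \<otimes> inv X2) = (inv a \<otimes> inv b) \<otimes> B"
    by (rule conj_mult_c[OF _ _ B ctr_inv[OF za] ctr_inv[OF zb] e3 e4]) (use X1 X2 in auto)
  have e234: "(X2 \<otimes> (inv X1 \<otimes> inv X2)) \<otimes> B \<otimes> inv (X2 \<otimes> (inv X1 \<otimes> inv X2)) = (b \<otimes> (inv a \<otimes> inv b)) \<otimes> B"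
    by (rule conj_mult_c[OF X2 _ B zb ctr_mult[OF ctr_inv[OF za] ctr_inv[OF zb]] e2 e34]) (use X1 X2 in auto)
  have e1234: "(X1 \<otimes> (X2 \<otimes> (inv X1 \<otimes> inv X2))) \<otimes> B \<otimes> inv (X1 \<otimes> (X2 \<otimes> (inv X1 \<otimes> inv X2)))
      = (a \<otimes> (b \<otimes> (inv a \<otimes> inv b))) \<otimes> B"
    by (rule conj_mult_c[OF X1 _ B za ctr_mult[OF zb ctr_mult[OF ctr_inv[OF za] ctr_inv[OF zb]]] e1 e234])
       (use X1 X2 in auto)
  have "a \<otimes> (b \<otimes> (inv a \<otimes> inv b)) = \<one>"
  proof -
    have "b \<otimes> (inv a \<otimes> inv b) = inv a \<otimes> (b \<otimes> inv b)"
      using ctr_comm_r[OF ctr_inv[OF za] bc, of "inv b"] ac bc by simp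
    then show ?thesis using ac bc by simp
  qed
  then have "(X1 \<otimes> (X2 \<otimes> (inv X1 \<otimes> inv X2))) \<otimes> B \<otimes> inv (X1 \<otimes> (X2 \<otimes> (inv X1 \<otimes> inv X2))) = B"
    using e1234 B by simp
  moreover define C where "C = X1 \<otimes> (X2 \<otimes> (inv X1 \<otimes> inv X2))"
  ultimately have CB: "C \<otimes> B \<otimes> inv C = B" by simp
  have Cc: "C \<in> carrier G" using X1 X2 by (simp add: C_def)
  have "C \<otimes> B = (C \<otimes> B \<otimes> inv C) \<otimes> C" using Cc B by (simp add: m_assoc)
  also have "\<dots> = B \<otimes> C" by (simp only: CB)
  finally show ?thesis using X1 X2 by (simp add: C_def m_assoc)
qed

lemma ext_commute:
  assumes f: "range f \<subseteq> carrier G" and B: "B \<in> carrier G"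
    and c: "\<And>t. f t \<otimes> B = B \<otimes> f t"
  shows "ext G f w \<otimes> B = B \<otimes> ext G f w"
proof (induction w)
  case Nil then show ?case using B by simp
next
  case (Cons x w)
  have lc: "lv G f x \<otimes> B = B \<otimes> lv G f x"
    using c f B inv_commute by (auto simp: lv_def)
  have "ext G f (x#w) \<otimes> B = lv G f x \<otimes> (ext G f w \<otimes> B)"
    using f B by (simp add: ext_Cons m_assoc lv_carrier ext_carrier)
  also have "\<dots> = (lv G f x \<otimes> B) \<otimes> ext G f w"
    using Cons f B by (simp add: m_assoc lv_carrier ext_carrier)
  also have "\<dots> = B \<otimes> ext G f (x#w)"
    using lc f B by (simp add: ext_Cons m_assoc lv_carrier ext_carrier)
  finally show ?case .
qed

end


lemma F2_mult_Nil: "x \<in> carrier F2 \<Longrightarrow> x \<otimes>\<^bsub>F2\<^esub> [] = x" "x \<in> carrier F2 \<Longrightarrow> [] \<otimes>\<^bsub>F2\<^esub> x = x"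
  by (simp_all add: F2_mult F2_carrier red_fr)

lemma e_comm:
  assumes "j \<noteq> k" "a \<in> carrier F2" "b \<in> carrier F2"
  shows "e n j a \<otimes>\<^bsub>P n\<^esub> e n k b = e n k b \<otimes>\<^bsub>P n\<^esub> e n j a"
  using assms by (auto simp: e_def F2_mult_Nil intro!: restrict_ext)

definition Pe :: "nat \<Rightarrow> nat list \<Rightarrow> (nat \<Rightarrow> (bool \<times> bool) list) \<Rightarrow> nat \<Rightarrow> (bool \<times> bool) list" where
  "Pe n js z = foldr (\<lambda>j acc. e n j (z j) \<otimes>\<^bsub>P n\<^esub> acc) js \<one>\<^bsub>P n\<^esub>"

lemma Pe_eq:
  assumes "set js \<subseteq> {..<n}" "distinct js" "\<And>i. i \<in> set js \<Longrightarrow> z i \<in> carrier F2"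
  shows "Pe n js z = (\<lambda>i\<in>{..<n}. if i \<in> set js then z i else [])"
  using assms
proof (induction js)
  case Nil then show ?case by (simp add: Pe_def F2_one)
next
  case (Cons j js)
  have IH: "Pe n js z = (\<lambda>i\<in>{..<n}. if i \<in> set js then z i else [])" using Cons by auto
  have zj: "z j \<in> carrier F2" using Cons.prems by auto
  have "Pe n (j#js) z = e n j (z j) \<otimes>\<^bsub>P n\<^esub> Pe n js z" by (simp add: Pe_def)
  also have "\<dots> = (\<lambda>i\<in>{..<n}. if i \<in> set (j#js) then z i else [])"
    unfolding IH using Cons.prems zj
    by (auto simp: e_def F2_mult_Nil F2_one_carrier intro!: restrict_ext)
  finally show ?case .
qed

lemma Pe_carrier: "(\<And>i. i \<in> set js \<Longrightarrow> z i \<in> carrier F2) \<Longrightarrow> Pe n js z \<in> carrier (P n)"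
proof (induction js)
  case Nil then show ?case using monoid.one_closed[OF group.is_monoid[OF group_P]] by (simp add: Pe_def del: carrier_product_group one_product_group)
next
  case (Cons j js)
  then show ?case using monoid.m_closed[OF group.is_monoid[OF group_P], of "e n j (z j)" n "Pe n js z"] e_carrier[of "z j" n j]
    by (simp add: Pe_def del: carrier_product_group mult_product_group)
qed

lemma central_lift:
  assumes se: "short_exact N G Q i p" and ce: "central_ext N G i"
    and h: "h \<in> hom (P n) Q" and hi: "inj_on h (carrier (P n))"
  shows "\<exists>\<Phi>. \<Phi> \<in> hom (P n) G \<and> inj_on \<Phi> (carrier (P n))"
proof -
  from se have grp: "group N" "group G" "group Q" and i: "i \<in> hom N G" "inj_on i (carrier N)"
    and p: "p \<in> hom G Q" and surj: "p ` carrier G = carrier Q"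
    and ker: "i ` carrier N = kernel G Q p" by (auto simp: short_exact_def)
  interpret F: group F2 by (rule group_F2)
  interpret PN: group "P n" by (rule group_P)
  interpret GG: group G by fact
  interpret QQ: group Q by fact
  interpret H: group_hom "P n" Q h
    using h by (simp add: group_hom_def group_hom_axioms_def group_P grp)
  interpret PP: group_hom G Q p
    using p by (simp add: group_hom_def group_hom_axioms_def grp)
  have "\<forall>jt. \<exists>g. g \<in> carrier G \<and> p g = h (e n (fst jt) [(snd jt, False)])"
  proof
    fix jt :: "nat \<times> bool"
    have "h (e n (fst jt) [(snd jt, False)]) \<in> carrier Q"
      using e_carrier[OF F2_single] by (rule H.hom_closed)
    then show "\<exists>g. g \<in> carrier G \<and> p g = h (e n (fst jt) [(snd jt, False)])"
      using surj by (metis imageE)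
  qed
  then obtain L' where L': "\<And>jt. L' jt \<in> carrier G \<and> p (L' jt) = h (e n (fst jt) [(snd jt, False)])"
    by metis
  define L where "L j t = L' (j, t)" for j t
  have Lc: "range (L j) \<subseteq> carrier G" for j using L' by (auto simp: L_def)
  have pL: "p (L j t) = h (e n j [(t, False)])" for j t using L' by (simp add: L_def)
  define \<phi> where "\<phi> j = ext G (L j)" for j
  have phihom: "\<phi> j \<in> hom F2 G" for j unfolding \<phi>_def by (rule GG.ext_hom[OF Lc])
  have pphi: "p (\<phi> j x) = h (e n j x)" if "x \<in> carrier F2" for j x
  proof -
    have "(p \<circ> \<phi> j) x = (h \<circ> e n j) x"
    proof (rule hom_F2_eq[OF grp(3) hom_compose[OF phihom p] hom_compose[OF e_hom h] _ that])
      fix t show "(p \<circ> \<phi> j) [(t, False)] = (h \<circ> e n j) [(t, False)]"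
        using ext_gen[OF grp(2) Lc] pL by (simp add: \<phi>_def)
    qed
    then show ?thesis by simp
  qed
  have phic: "\<phi> j x \<in> carrier G" if "x \<in> carrier F2" for j x
    using phihom that by (rule hom_in_carrier)
  have cen: "cntrl G (x \<otimes>\<^bsub>G\<^esub> y \<otimes>\<^bsub>G\<^esub> inv\<^bsub>G\<^esub> x \<otimes>\<^bsub>G\<^esub> inv\<^bsub>G\<^esub> y)"
    if xy: "x \<in> carrier G" "y \<in> carrier G" and c: "p x \<otimes>\<^bsub>Q\<^esub> p y = p y \<otimes>\<^bsub>Q\<^esub> p x" for x y
  proof -
    define z where "z = x \<otimes>\<^bsub>G\<^esub> y \<otimes>\<^bsub>G\<^esub> inv\<^bsub>G\<^esub> x \<otimes>\<^bsub>G\<^esub> inv\<^bsub>G\<^esub> y"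
    have zc: "z \<in> carrier G" using xy by (simp add: z_def)
    have pxc: "p x \<in> carrier Q" "p y \<in> carrier Q" using xy by simp_all
    have "p z = p x \<otimes>\<^bsub>Q\<^esub> p y \<otimes>\<^bsub>Q\<^esub> inv\<^bsub>Q\<^esub> p x \<otimes>\<^bsub>Q\<^esub> inv\<^bsub>Q\<^esub> p y"
      using xy by (simp add: z_def)
    also have "\<dots> = p y \<otimes>\<^bsub>Q\<^esub> p x \<otimes>\<^bsub>Q\<^esub> inv\<^bsub>Q\<^esub> p x \<otimes>\<^bsub>Q\<^esub> inv\<^bsub>Q\<^esub> p y" by (simp only: c)
    also have "\<dots> = \<one>\<^bsub>Q\<^esub>" using pxc by (simp add: QQ.m_assoc)
    finally have "z \<in> kernel G Q p" using zc by (simp add: kernel_def)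
    then have "z \<in> i ` carrier N" using ker by simp
    then have "\<forall>g\<in>carrier G. z \<otimes>\<^bsub>G\<^esub> g = g \<otimes>\<^bsub>G\<^esub> z" using ce unfolding central_ext_def by blast
    then show ?thesis using zc by (simp add: cntrl_def z_def)
  qed
  have cenphi: "cntrl G (\<phi> j a \<otimes>\<^bsub>G\<^esub> \<phi> k b \<otimes>\<^bsub>G\<^esub> inv\<^bsub>G\<^esub> \<phi> j a \<otimes>\<^bsub>G\<^esub> inv\<^bsub>G\<^esub> \<phi> k b)"
    if "j \<noteq> k" "a \<in> carrier F2" "b \<in> carrier F2" for j k a b
  proof (rule cen)
    show "\<phi> j a \<in> carrier G" "\<phi> k b \<in> carrier G" using that phic by auto
    have "h (e n j a) \<otimes>\<^bsub>Q\<^esub> h (e n k b) = h (e n j a \<otimes>\<^bsub>P n\<^esub> e n k b)"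
      using that e_carrier by (simp add: H.hom_mult del: mult_product_group carrier_product_group)
    also have "\<dots> = h (e n k b \<otimes>\<^bsub>P n\<^esub> e n j a)" using e_comm[OF that] by simp
    also have "\<dots> = h (e n k b) \<otimes>\<^bsub>Q\<^esub> h (e n j a)"
      using that e_carrier by (simp add: H.hom_mult del: mult_product_group carrier_product_group)
    finally show "p (\<phi> j a) \<otimes>\<^bsub>Q\<^esub> p (\<phi> k b) = p (\<phi> k b) \<otimes>\<^bsub>Q\<^esub> p (\<phi> j a)"
      using that pphi by simp
  qed
  have Lgen: "L j t = \<phi> j [(t,False)]" for j t using ext_gen[OF grp(2) Lc] by (simp add: \<phi>_def)
  have Linv: "inv\<^bsub>G\<^esub> L j t = \<phi> j [(t,True)]" for j t
  proof -
    have "L j t \<in> carrier G" using Lc by auto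
    then show ?thesis by (simp add: \<phi>_def ext_Cons lv_def)
  qed
  define Cm where "Cm x y = x \<otimes>\<^bsub>G\<^esub> y \<otimes>\<^bsub>G\<^esub> inv\<^bsub>G\<^esub> x \<otimes>\<^bsub>G\<^esub> inv\<^bsub>G\<^esub> y" for x y
  define \<Phi>s where "\<Phi>s j = \<phi> j ` carrier F2" for j
  have Phisc: "x \<in> carrier G" if "x \<in> \<Phi>s j" for x j using that phic by (auto simp: \<Phi>s_def)
  have stepa: "Cm Y1 Y2 \<otimes>\<^bsub>G\<^esub> Xe = Xe \<otimes>\<^bsub>G\<^esub> Cm Y1 Y2"
    if "j \<noteq> k" "Xe \<in> \<Phi>s j" "Y1 \<in> \<Phi>s k" "Y2 \<in> \<Phi>s k" for j k Xe Y1 Y2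
    unfolding Cm_def
    by (rule GG.CL) (use that Phisc cenphi in \<open>auto simp: \<Phi>s_def\<close>)
  have stepb: "Cm X1 X2 \<otimes>\<^bsub>G\<^esub> Cm Y1 Y2 = Cm Y1 Y2 \<otimes>\<^bsub>G\<^esub> Cm X1 X2"
    if "j \<noteq> k" "X1 \<in> \<Phi>s j" "X2 \<in> \<Phi>s j" "Y1 \<in> \<Phi>s k" "Y2 \<in> \<Phi>s k" for j k X1 X2 Y1 Y2
  proof -
    have Cc: "Cm Y1 Y2 \<in> carrier G" using that Phisc by (simp add: Cm_def)
    have one: "cntrl G (Xi \<otimes>\<^bsub>G\<^esub> Cm Y1 Y2 \<otimes>\<^bsub>G\<^esub> inv\<^bsub>G\<^esub> Xi \<otimes>\<^bsub>G\<^esub> inv\<^bsub>G\<^esub> Cm Y1 Y2)"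
      if "Xi \<in> \<Phi>s j" for Xi
    proof -
      have Xc: "Xi \<in> carrier G" using that Phisc by blast
      have "Xi \<otimes>\<^bsub>G\<^esub> Cm Y1 Y2 = Cm Y1 Y2 \<otimes>\<^bsub>G\<^esub> Xi" using stepa[OF \<open>j \<noteq> k\<close> that] \<open>Y1 \<in> _\<close> \<open>Y2 \<in> _\<close> by simp
      then have "Xi \<otimes>\<^bsub>G\<^esub> Cm Y1 Y2 \<otimes>\<^bsub>G\<^esub> inv\<^bsub>G\<^esub> Xi \<otimes>\<^bsub>G\<^esub> inv\<^bsub>G\<^esub> Cm Y1 Y2 = \<one>\<^bsub>G\<^esub>"
        using Xc Cc by (simp add: GG.m_assoc)
      then show ?thesis by (simp add: cntrl_def)
    qed
    have "(X1 \<otimes>\<^bsub>G\<^esub> X2 \<otimes>\<^bsub>G\<^esub> inv\<^bsub>G\<^esub> X1 \<otimes>\<^bsub>G\<^esub> inv\<^bsub>G\<^esub> X2) \<otimes>\<^bsub>G\<^esub> Cm Y1 Y2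
        = Cm Y1 Y2 \<otimes>\<^bsub>G\<^esub> (X1 \<otimes>\<^bsub>G\<^esub> X2 \<otimes>\<^bsub>G\<^esub> inv\<^bsub>G\<^esub> X1 \<otimes>\<^bsub>G\<^esub> inv\<^bsub>G\<^esub> X2)"
      by (rule GG.CL) (use that Phisc Cc one in auto)
    then show ?thesis unfolding Cm_def[of X1 X2] .
  qed
  define S0 where "S0 = (\<lambda>t. if t then ua else vb)"
  have S0c: "range S0 \<subseteq> carrier F2" using red_ua_vb by (auto simp: S0_def)
  define \<sigma> where "\<sigma> = ext F2 S0"
  have sighom: "\<sigma> \<in> hom F2 F2" unfolding \<sigma>_def by (rule F.ext_hom[OF S0c])
  have siginj: "inj_on \<sigma> (carrier F2)" using comm_inj by (simp add: \<sigma>_def S0_def)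
  define \<psi> where "\<psi> j = \<phi> j \<circ> \<sigma>" for j
  have psihom: "\<psi> j \<in> hom F2 G" for j unfolding \<psi>_def using sighom phihom by (rule hom_compose)
  have psic: "\<psi> j x \<in> carrier G" if "x \<in> carrier F2" for j x
    using psihom that by (rule hom_in_carrier)
  have psigen: "\<psi> j [(t,False)] = (if t then Cm (L j True) (L j False)
        else Cm (inv\<^bsub>G\<^esub> L j True) (inv\<^bsub>G\<^esub> L j False))" for j t
  proof -
    have "\<psi> j [(t,False)] = \<phi> j (S0 t)" using ext_gen[OF group_F2 S0c] by (simp add: \<psi>_def \<sigma>_def)
    moreover have "L j True \<in> carrier G" "L j False \<in> carrier G" using Lc by auto
    ultimately show ?thesis
      by (cases t) (simp_all add: S0_def \<phi>_def ua_def vb_def ext_Cons lv_def Cm_def GG.m_assoc)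
  qed
  have LPhis1: "L j t \<in> \<Phi>s j" for j t
    unfolding \<Phi>s_def Lgen by (rule imageI[OF F2_single])
  have LPhis2: "inv\<^bsub>G\<^esub> L j t \<in> \<Phi>s j" for j t
    unfolding \<Phi>s_def Linv by (rule imageI[OF F2_single])
  note LPhis = LPhis1 LPhis2
  have gencomm: "\<psi> j [(t,False)] \<otimes>\<^bsub>G\<^esub> \<psi> k [(r,False)] = \<psi> k [(r,False)] \<otimes>\<^bsub>G\<^esub> \<psi> j [(t,False)]"
    if "j \<noteq> k" for j k t r
    unfolding psigen by (cases t; cases r; simp only: if_True if_False; rule stepb[OF that]; rule LPhis)
  have psiext: "\<psi> j x = ext G (\<lambda>t. \<psi> j [(t,False)]) x" if "x \<in> carrier F2" for j x
    by (rule hom_F2_ext[OF grp(2) psihom that])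
  have genrange: "range (\<lambda>t. \<psi> j [(t,False)]) \<subseteq> carrier G" for j using psic F2_single by auto
  have psicomm: "\<psi> j x \<otimes>\<^bsub>G\<^esub> \<psi> k y = \<psi> k y \<otimes>\<^bsub>G\<^esub> \<psi> j x"
    if "j \<noteq> k" "x \<in> carrier F2" "y \<in> carrier F2" for j k x y
  proof -
    have c1: "\<psi> k y \<otimes>\<^bsub>G\<^esub> \<psi> j [(t,False)] = \<psi> j [(t,False)] \<otimes>\<^bsub>G\<^esub> \<psi> k y" for t
      unfolding psiext[OF that(3), of k]
      by (rule GG.ext_commute[OF genrange psic[OF F2_single]])
         (use gencomm[OF that(1)] in metis)
    have "ext G (\<lambda>t. \<psi> j [(t,False)]) x \<otimes>\<^bsub>G\<^esub> \<psi> k y = \<psi> k y \<otimes>\<^bsub>G\<^esub> ext G (\<lambda>t. \<psi> j [(t,False)]) x"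
      by (rule GG.ext_commute[OF genrange psic[OF that(3)]]) (rule c1[symmetric])
    then show ?thesis using psiext[OF that(2), of j] by simp
  qed
  define Pi where "Pi js x = foldr (\<lambda>j acc. \<psi> j (x j) \<otimes>\<^bsub>G\<^esub> acc) js \<one>\<^bsub>G\<^esub>" for js x
  have Pic: "Pi js x \<in> carrier G" if "\<forall>j\<in>set js. x j \<in> carrier F2" for js x
    using that by (induction js) (auto simp: Pi_def psic)
  have Picomm: "\<psi> j a \<otimes>\<^bsub>G\<^esub> Pi js x = Pi js x \<otimes>\<^bsub>G\<^esub> \<psi> j a"
    if "j \<notin> set js" "a \<in> carrier F2" "\<forall>k\<in>set js. x k \<in> carrier F2" for j js a x
    using that
  proof (induction js)
    case Nil then show ?case using psic by (simp add: Pi_def)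
  next
    case (Cons k js)
    have a: "\<psi> j a \<in> carrier G" using Cons psic by auto
    have b: "\<psi> k (x k) \<in> carrier G" using Cons psic by auto
    have R: "Pi js x \<in> carrier G" using Cons Pic by auto
    have IH: "\<psi> j a \<otimes>\<^bsub>G\<^esub> Pi js x = Pi js x \<otimes>\<^bsub>G\<^esub> \<psi> j a" using Cons by auto
    have c: "\<psi> j a \<otimes>\<^bsub>G\<^esub> \<psi> k (x k) = \<psi> k (x k) \<otimes>\<^bsub>G\<^esub> \<psi> j a"
      using psicomm[of j k a "x k"] Cons.prems by auto
    have "\<psi> j a \<otimes>\<^bsub>G\<^esub> Pi (k#js) x = (\<psi> j a \<otimes>\<^bsub>G\<^esub> \<psi> k (x k)) \<otimes>\<^bsub>G\<^esub> Pi js x"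
      using a b R by (simp add: Pi_def GG.m_assoc)
    also have "\<dots> = \<psi> k (x k) \<otimes>\<^bsub>G\<^esub> (\<psi> j a \<otimes>\<^bsub>G\<^esub> Pi js x)"
      using a b R by (simp add: c GG.m_assoc)
    also have "\<dots> = \<psi> k (x k) \<otimes>\<^bsub>G\<^esub> (Pi js x \<otimes>\<^bsub>G\<^esub> \<psi> j a)" by (simp only: IH)
    also have "\<dots> = Pi (k#js) x \<otimes>\<^bsub>G\<^esub> \<psi> j a"
      using a b R by (simp add: Pi_def GG.m_assoc)
    finally show ?case .
  qed
  have Pimult: "Pi js (\<lambda>j. x j \<otimes>\<^bsub>F2\<^esub> y j) = Pi js x \<otimes>\<^bsub>G\<^esub> Pi js y"
    if "distinct js" "\<forall>j\<in>set js. x j \<in> carrier F2 \<and> y j \<in> carrier F2" for js x y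
    using that
  proof (induction js)
    case Nil then show ?case by (simp add: Pi_def)
  next
    case (Cons j js)
    have xj: "\<psi> j (x j) \<in> carrier G" and yj: "\<psi> j (y j) \<in> carrier G"
      using Cons psic by auto
    have Rx: "Pi js x \<in> carrier G" and Ry: "Pi js y \<in> carrier G" using Cons Pic by auto
    have IH: "Pi js (\<lambda>j. x j \<otimes>\<^bsub>F2\<^esub> y j) = Pi js x \<otimes>\<^bsub>G\<^esub> Pi js y" using Cons by auto
    have c: "\<psi> j (y j) \<otimes>\<^bsub>G\<^esub> Pi js x = Pi js x \<otimes>\<^bsub>G\<^esub> \<psi> j (y j)"
      using Picomm[of j js "y j" x] Cons.prems by auto
    have hm: "\<psi> j (x j \<otimes>\<^bsub>F2\<^esub> y j) = \<psi> j (x j) \<otimes>\<^bsub>G\<^esub> \<psi> j (y j)"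
      using Cons.prems psihom by (simp add: hom_mult)
    have "Pi (j#js) (\<lambda>j. x j \<otimes>\<^bsub>F2\<^esub> y j) = (\<psi> j (x j) \<otimes>\<^bsub>G\<^esub> \<psi> j (y j)) \<otimes>\<^bsub>G\<^esub> (Pi js x \<otimes>\<^bsub>G\<^esub> Pi js y)"
      using IH hm by (simp add: Pi_def)
    also have "\<dots> = \<psi> j (x j) \<otimes>\<^bsub>G\<^esub> (\<psi> j (y j) \<otimes>\<^bsub>G\<^esub> Pi js x) \<otimes>\<^bsub>G\<^esub> Pi js y"
      using xj yj Rx Ry by (simp add: GG.m_assoc)
    also have "\<dots> = \<psi> j (x j) \<otimes>\<^bsub>G\<^esub> (Pi js x \<otimes>\<^bsub>G\<^esub> \<psi> j (y j)) \<otimes>\<^bsub>G\<^esub> Pi js y" by (simp only: c)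
    also have "\<dots> = Pi (j#js) x \<otimes>\<^bsub>G\<^esub> Pi (j#js) y"
      using xj yj Rx Ry by (simp add: Pi_def GG.m_assoc)
    finally show ?case .
  qed
  have Picong: "Pi js x = Pi js y" if "\<forall>j\<in>set js. x j = y j" for js x y
    using that by (induction js) (simp_all add: Pi_def)
  have pPi: "p (Pi js x) = h (Pe n js (\<lambda>j. \<sigma> (x j)))"
    if "set js \<subseteq> {..<n}" "\<forall>j\<in>set js. x j \<in> carrier F2" for js x
    using that
  proof (induction js)
    case Nil then show ?case by (simp add: Pi_def Pe_def del: one_product_group)
  next
    case (Cons j js)
    have sx: "\<sigma> (x j) \<in> carrier F2" using Cons.prems sighom by (auto intro: hom_in_carrier)
    have sxs: "\<And>i. i \<in> set js \<Longrightarrow> \<sigma> (x i) \<in> carrier F2" using Cons.prems sighom by (auto intro: hom_in_carrier)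
    have "p (Pi (j#js) x) = p (\<psi> j (x j)) \<otimes>\<^bsub>Q\<^esub> p (Pi js x)"
      using Cons.prems psic Pic by (simp add: Pi_def)
    also have "p (\<psi> j (x j)) = h (e n j (\<sigma> (x j)))" using pphi[OF sx] by (simp add: \<psi>_def)
    also have "p (Pi js x) = h (Pe n js (\<lambda>j. \<sigma> (x j)))" using Cons by auto
    also have "h (e n j (\<sigma> (x j))) \<otimes>\<^bsub>Q\<^esub> h (Pe n js (\<lambda>j. \<sigma> (x j))) = h (Pe n (j#js) (\<lambda>j. \<sigma> (x j)))"
      using H.hom_mult[OF e_carrier[OF sx] Pe_carrier[OF sxs]] by (simp add: Pe_def)
    finally show ?case .
  qed
  define \<Phi> where "\<Phi> x = Pi [0..<n] x" for x
  have Phihom: "\<Phi> \<in> hom (P n) G"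
  proof (rule homI)
    fix x assume "x \<in> carrier (P n)"
    then show "\<Phi> x \<in> carrier G" unfolding \<Phi>_def by (intro Pic) (auto simp: PiE_iff)
  next
    fix x y assume xy: "x \<in> carrier (P n)" "y \<in> carrier (P n)"
    have "\<Phi> (x \<otimes>\<^bsub>P n\<^esub> y) = Pi [0..<n] (\<lambda>j. x j \<otimes>\<^bsub>F2\<^esub> y j)"
      unfolding \<Phi>_def by (rule Picong) auto
    also have "\<dots> = \<Phi> x \<otimes>\<^bsub>G\<^esub> \<Phi> y"
      unfolding \<Phi>_def by (rule Pimult) (use xy in \<open>auto simp: PiE_iff\<close>)
    finally show "\<Phi> (x \<otimes>\<^bsub>P n\<^esub> y) = \<Phi> x \<otimes>\<^bsub>G\<^esub> \<Phi> y" .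
  qed
  have pPhi: "p (\<Phi> x) = h (\<lambda>i\<in>{..<n}. \<sigma> (x i))" if "x \<in> carrier (P n)" for x
  proof -
    have xs: "\<forall>j\<in>set [0..<n]. x j \<in> carrier F2" using that by (auto simp: PiE_iff)
    have sxs: "\<And>i. i \<in> set [0..<n] \<Longrightarrow> \<sigma> (x i) \<in> carrier F2" using xs sighom by (auto intro: hom_in_carrier)
    have "p (\<Phi> x) = h (Pe n [0..<n] (\<lambda>j. \<sigma> (x j)))" unfolding \<Phi>_def by (rule pPi) (use xs in auto)
    also have "Pe n [0..<n] (\<lambda>j. \<sigma> (x j)) = (\<lambda>i\<in>{..<n}. \<sigma> (x i))"
    proof -
      have "Pe n [0..<n] (\<lambda>j. \<sigma> (x j)) = (\<lambda>i\<in>{..<n}. if i \<in> set [0..<n] then \<sigma> (x i) else [])"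
        by (rule Pe_eq) (use sxs in auto)
      also have "\<dots> = (\<lambda>i\<in>{..<n}. \<sigma> (x i))" by (rule restrict_ext) simp
      finally show ?thesis .
    qed
    finally show ?thesis .
  qed
  have Phiinj: "inj_on \<Phi> (carrier (P n))"
  proof (rule inj_onI)
    fix x y assume xy: "x \<in> carrier (P n)" "y \<in> carrier (P n)" "\<Phi> x = \<Phi> y"
    have sc: "(\<lambda>i\<in>{..<n}. \<sigma> (x i)) \<in> carrier (P n)" "(\<lambda>i\<in>{..<n}. \<sigma> (y i)) \<in> carrier (P n)"
      using xy(1,2) sighom by (auto simp: PiE_iff intro: hom_in_carrier)
    have "h (\<lambda>i\<in>{..<n}. \<sigma> (x i)) = h (\<lambda>i\<in>{..<n}. \<sigma> (y i))" using pPhi xy by metis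
    then have eq: "(\<lambda>i\<in>{..<n}. \<sigma> (x i)) = (\<lambda>i\<in>{..<n}. \<sigma> (y i))" using inj_onD[OF hi _ sc] by blast
    have x1: "x \<in> (\<Pi>\<^sub>E i\<in>{..<n}. carrier F2)" and y1: "y \<in> (\<Pi>\<^sub>E i\<in>{..<n}. carrier F2)"
      using xy(1,2) by simp_all
    show "x = y"
    proof (rule PiE_ext[OF x1 y1])
      fix i assume i: "i \<in> {..<n}"
      then have "\<sigma> (x i) = \<sigma> (y i)" using fun_cong[OF eq, of i] by simp
      then show "x i = y i" using inj_onD[OF siginj] x1 y1 i by (auto simp: PiE_iff)
    qed
  qed
  show ?thesis using Phihom Phiinj by blast
qed


lemma embeds_mono:
  assumes "\<And>n. F2_power_embeds n G \<Longrightarrow> F2_power_embeds n Q"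
  shows "free_subgroup_rank G \<le> free_subgroup_rank Q"
  unfolding free_subgroup_rank_def
  by (rule Sup_subset_mono) (use assms in auto)

theorem proposition2p4:
  fixes N :: "('n, 'a) monoid_scheme" and G :: "('g, 'b) monoid_scheme"
    and Q :: "('q, 'c) monoid_scheme"
    and i :: "'n \<Rightarrow> 'g" and p :: "'g \<Rightarrow> 'q"
  assumes "short_exact N G Q i p"
    and "free_subgroup_rank N = 0"
  shows "free_subgroup_rank G \<le> free_subgroup_rank Q \<and>
         ((split_ext G Q p \<or> central_ext N G i) \<longrightarrow>
            free_subgroup_rank G = free_subgroup_rank Q)"
proof -
  have noN: "\<not> F2_power_embeds 1 N"
  proof
    assume "F2_power_embeds 1 N"
    then have "enat 1 \<le> free_subgroup_rank N" unfolding free_subgroup_rank_def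
      by (intro Sup_upper) auto
    then show False using assms(2) by (simp add: zero_enat_def)
  qed
  have p: "p \<in> hom G Q" using assms(1) by (simp add: short_exact_def)
  have GQ: "F2_power_embeds n Q" if "F2_power_embeds n G" for n
  proof -
    from that obtain h where h: "h \<in> hom (P n) G" "inj_on h (carrier (P n))"
      by (auto simp: F2_power_embeds_def)
    have "inj_on (p \<circ> h) (carrier (P n))" by (rule main_inj[OF assms(1) noN h])
    moreover have "p \<circ> h \<in> hom (P n) Q" using h(1) p by (rule hom_compose)
    ultimately show ?thesis unfolding F2_power_embeds_def by blast
  qed
  have QG: "F2_power_embeds n G" if "F2_power_embeds n Q" and ext: "split_ext G Q p \<or> central_ext N G i" for n
  proof -
    from that obtain h where h: "h \<in> hom (P n) Q" "inj_on h (carrier (P n))"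
      by (auto simp: F2_power_embeds_def)
    show ?thesis
    proof (cases "split_ext G Q p")
      case True
      then obtain s where s: "s \<in> hom Q G" "\<And>q. q \<in> carrier Q \<Longrightarrow> p (s q) = q"
        by (auto simp: split_ext_def)
      have sinj: "inj_on s (carrier Q)" by (rule inj_onI) (metis s(2))
      have "inj_on (s \<circ> h) (carrier (P n))"
        by (rule comp_inj_on[OF h(2) inj_on_subset[OF sinj]]) (use h(1) in \<open>auto simp: hom_def\<close>)
      moreover have "s \<circ> h \<in> hom (P n) G" using h(1) s(1) by (rule hom_compose)
      ultimately show ?thesis unfolding F2_power_embeds_def by blast
    next
      case False
      then have "central_ext N G i" using ext by blast
      then show ?thesis using central_lift[OF assms(1) _ h] unfolding F2_power_embeds_def by blast
    qed
  qed
  have le: "free_subgroup_rank G \<le> free_subgroup_rank Q" by (rule embeds_mono) (rule GQ)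
  moreover have "free_subgroup_rank G = free_subgroup_rank Q" if "split_ext G Q p \<or> central_ext N G i"
    using le embeds_mono[of Q G] QG[OF _ that] by (meson order_antisym)
  ultimately show ?thesis by blast
qed


end
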